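(* Let $b_{10}>0$, $b_{11}\ge0$, $c_{01}\ge0$, $c_{11}\ge0$, and define $\gamma'=\frac{c_{01}}{b_{10}}$, $\delta'=\frac{b_{10}-b_{11}+c_{11}-c_{01}}{b_{10}}$. Let $\mathcal{F}=\{(P_{11},t): P_{11}\in[0,1],\ P_{11}-1\le t\le P_{11}\}$ and $\mathcal{P}=\{(P_{11},t)\in\mathcal{F}: t>\gamma'+\delta'P_{11}\}$. If $c_{11}\ge b_{11}-b_{10}$ (in particular, whenever $b_{11}\le b_{10}$), then $\mathcal{P}$ contains no pair $(P_{11},t)$ with $t<0$.
   Context: Double binary causal classification: $P_{11}$ is the probability of the positive outcome under the positive treatment, $t=P_{11}-P_{10}$ the estimated individual treatment effect, $b_{ij}$ the benefit of outcome $i$ under treatment $j$ and $c_{ij}$ the cost of outcome $i$ under treatment $j$, normalized so that $c_{00}=c_{10}=0$, $b_{00}=b_{01}=0$. The cost-sensitive causal decision boundary is $t=\gamma'+\delta'P_{11}$ and $\mathcal{P}$ is the positive treatment set. *)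

theory Defs
  imports Complex_Main
begin

definition gamma' :: "real \<Rightarrow> real \<Rightarrow> real" where
  "gamma' b10 c01 = c01 / b10"

definition delta' :: "real \<Rightarrow> real \<Rightarrow> real \<Rightarrow> real \<Rightarrow> real" where
  "delta' b10 b11 c01 c11 = (b10 - b11 + c11 - c01) / b10"

definition feasible_region :: "(real \<times> real) set" where
  "feasible_region = {(p, t). 0 \<le> p \<and> p \<le> 1 \<and> p - 1 \<le> t \<and> t \<le> p}"

definition pos_treatment_set :: "real \<Rightarrow> real \<Rightarrow> real \<Rightarrow> real \<Rightarrow> (real \<times> real) set" where
  "pos_treatment_set b10 b11 c01 c11 =
     {(p, t). (p, t) \<in> feasible_region \<and> t > gamma' b10 c01 + delta' b10 b11 c01 c11 * p}"

end

theory Submission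
  imports Defs
begin

theorem corollary2:
  fixes b10 b11 c01 c11 :: real
  assumes "b10 > 0" and "b11 \<ge> 0" and "c01 \<ge> 0" and "c11 \<ge> 0"
    and "c11 \<ge> b11 - b10"
  shows "\<not> (\<exists>p t. (p, t) \<in> pos_treatment_set b10 b11 c01 c11 \<and> t < 0)"
proof
  assume "\<exists>p t. (p, t) \<in> pos_treatment_set b10 b11 c01 c11 \<and> t < 0"
  then obtain p t where h: "0 \<le> p" "p \<le> 1" "t < 0"
    and g: "t > c01 / b10 + (b10 - b11 + c11 - c01) / b10 * p"
    by (auto simp: pos_treatment_set_def feasible_region_def gamma'_def delta'_def)
  have "b10 * t > b10 * (c01 / b10 + (b10 - b11 + c11 - c01) / b10 * p)"
    using g assms(1) by simp
  also have "b10 * (c01 / b10 + (b10 - b11 + c11 - c01) / b10 * p)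
      = c01 * (1 - p) + (b10 - b11 + c11) * p"
    using assms(1) by (simp add: field_simps)
  finally have "b10 * t > c01 * (1 - p) + (b10 - b11 + c11) * p" .
  moreover have "c01 * (1 - p) \<ge> 0" using assms h by simp
  moreover have "(b10 - b11 + c11) * p \<ge> 0" using assms h by simp
  moreover have "b10 * t < 0" using assms(1) h(3) by (simp add: mult_pos_neg)
  ultimately show False by linarith
qed

end
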